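(* Let $1<q<+\infty$ and let $u:\mathbb{R}^3\to\mathbb{R}^3$ satisfy $\nabla\cdot u=0$ and $\nabla u\in L^q(\mathbb{R}^3)$. Let $\omega=\nabla\times u$ and $S=\frac12\left(\nabla u+(\nabla u)^{tr}\right)$. Then for every fixed unit vector $v\in\mathbb{R}^3$, \begin{align*} \|(v\cdot\nabla)u\|_{L^q}&\le C_q\|v\times\omega\|_{L^q}, & \|(v\cdot\nabla)u\|_{L^q}&\le C_q\|2Sv\|_{L^q},\\ \|\nabla(u\cdot v)\|_{L^q}&\le C_q\|v\times\omega\|_{L^q}, & \|\nabla(u\cdot v)\|_{L^q}&\le C_q\|2Sv\|_{L^q}, \end{align*} and furthermore \[ \frac{1}{2C_q}\|v\times\omega\|_{L^q}\le\|2Sv\|_{L^q}\le 2C_q\|v\times\omega\|_{L^q}, \] where $C_q$ is the constant described in the context.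
   Context: Helmholtz decomposition: for $1<q<+\infty$, every $w\in L^q(\mathbb{R}^3;\mathbb{R}^3)$ decomposes uniquely as $w=P_{df}(w)+P_{gr}(w)$, where $P_{df}(w)\in L^q$ is weakly divergence free ($\int P_{df}(w)\cdot\nabla\phi=0$ for all $\phi\in C_c^\infty(\mathbb{R}^3)$) and $P_{gr}(w)=\nabla f\in L^q$ is a gradient ($\int\nabla f\cdot z=0$ for all divergence-free $z\in C_c^\infty(\mathbb{R}^3;\mathbb{R}^3)$). $C_q\ge1$ is a constant depending only on $q$ such that $\|P_{df}(w)\|_{L^q}\le C_q\|w\|_{L^q}$ and $\|P_{gr}(w)\|_{L^q}\le C_q\|w\|_{L^q}$ for all $w\in L^q(\mathbb{R}^3;\mathbb{R}^3)$. Here $(\nabla u)_{ij}=\partial_iu_j$. *)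

theory Defs
  imports "HOL-Analysis.Analysis"
begin

definition pdiff :: "3 \<Rightarrow> (real^3 \<Rightarrow> real) \<Rightarrow> real^3 \<Rightarrow> real" where
  "pdiff i f x = frechet_derivative f (at x) (axis i 1)"

text \<open>C-infinity functions: differentiable everywhere, with all partial
  derivatives again C-infinity (greatest such class).\<close>
coinductive smooth3 :: "(real^3 \<Rightarrow> real) \<Rightarrow> bool" where
  "(\<forall>x. f differentiable (at x)) \<Longrightarrow> (\<forall>i. smooth3 (pdiff i f)) \<Longrightarrow> smooth3 f"

definition test_fun :: "(real^3 \<Rightarrow> real) \<Rightarrow> bool" where
  "test_fun \<phi> \<longleftrightarrow> smooth3 \<phi> \<and> bounded {x. \<phi> x \<noteq> 0}"

definition test_field :: "(real^3 \<Rightarrow> real^3) \<Rightarrow> bool" where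
  "test_field z \<longleftrightarrow> (\<forall>j. test_fun (\<lambda>x. z x $ j))"

definition grad3 :: "(real^3 \<Rightarrow> real) \<Rightarrow> real^3 \<Rightarrow> real^3" where
  "grad3 \<phi> x = (\<chi> i. pdiff i \<phi> x)"

definition div3 :: "(real^3 \<Rightarrow> real^3) \<Rightarrow> real^3 \<Rightarrow> real" where
  "div3 z x = (\<Sum>i\<in>UNIV. pdiff i (\<lambda>y. z y $ i) x)"

definition in_Lq :: "real \<Rightarrow> (real^3 \<Rightarrow> 'a::euclidean_space) \<Rightarrow> bool" where
  "in_Lq q f \<longleftrightarrow> f \<in> borel_measurable lebesgue \<and>
     integrable lebesgue (\<lambda>x. norm (f x) powr q)"

definition Lq_norm :: "real \<Rightarrow> (real^3 \<Rightarrow> 'a::euclidean_space) \<Rightarrow> real" where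
  "Lq_norm q f = (integral\<^sup>L lebesgue (\<lambda>x. norm (f x) powr q)) powr (1 / q)"

definition weakly_div_free :: "(real^3 \<Rightarrow> real^3) \<Rightarrow> bool" where
  "weakly_div_free w \<longleftrightarrow>
     (\<forall>\<phi>. test_fun \<phi> \<longrightarrow> integral\<^sup>L lebesgue (\<lambda>x. w x \<bullet> grad3 \<phi> x) = 0)"

definition is_gradient_field :: "(real^3 \<Rightarrow> real^3) \<Rightarrow> bool" where
  "is_gradient_field w \<longleftrightarrow>
     (\<forall>z. test_field z \<and> (\<forall>x. div3 z x = 0) \<longrightarrow>
          integral\<^sup>L lebesgue (\<lambda>x. w x \<bullet> z x) = 0)"

definition helmholtz_const :: "real \<Rightarrow> real \<Rightarrow> bool" where
  "helmholtz_const q C \<longleftrightarrow> C \<ge> 1 \<and>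
     (\<forall>w a b. in_Lq q w \<and> in_Lq q a \<and> in_Lq q b \<and>
        weakly_div_free a \<and> is_gradient_field b \<and>
        (AE x in lebesgue. w x = a x + b x) \<longrightarrow>
          Lq_norm q a \<le> C * Lq_norm q w \<and> Lq_norm q b \<le> C * Lq_norm q w)"

text \<open>G x $ i $ j is the weak derivative d_i u_j (convention (grad u)_ij = d_i u_j).\<close>
definition weak_grad :: "(real^3 \<Rightarrow> real^3) \<Rightarrow> (real^3 \<Rightarrow> real^3^3) \<Rightarrow> bool" where
  "weak_grad u G \<longleftrightarrow>
     u \<in> borel_measurable lebesgue \<and> G \<in> borel_measurable lebesgue \<and>
     (\<forall>K. compact K \<longrightarrow> set_integrable lebesgue K u \<and> set_integrable lebesgue K G) \<and>
     (\<forall>\<phi> i j. test_fun \<phi> \<longrightarrow>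
        integral\<^sup>L lebesgue (\<lambda>x. u x $ j * pdiff i \<phi> x) =
        - integral\<^sup>L lebesgue (\<lambda>x. G x $ i $ j * \<phi> x))"

definition curl_of :: "real^3^3 \<Rightarrow> real^3" where
  "curl_of A = vector [A$2$3 - A$3$2, A$3$1 - A$1$3, A$1$2 - A$2$1]"

definition sym_part :: "real^3^3 \<Rightarrow> real^3^3" where
  "sym_part A = (1/2) *\<^sub>R (A + transpose A)"

end

theory Submission
  imports Defs
begin

lemma borel_leb: "(f::'a::euclidean_space \<Rightarrow> 'b::euclidean_space) \<in> borel_measurable borel \<Longrightarrow> f \<in> borel_measurable lebesgue"
  by (metis measurable_lborel2 measurable_completion)

lemma smooth3_D: assumes "smooth3 f" shows "\<forall>x. f differentiable (at x)" "smooth3 (pdiff i f)"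
  using assms by (auto elim: smooth3.cases)

lemma smooth3_cont: "smooth3 f \<Longrightarrow> continuous_on UNIV f"
  by (meson continuous_at_imp_continuous_on differentiable_imp_continuous_within smooth3_D(1))

lemma pdiff_zero_outside:
  assumes "x \<notin> closure {y. f y \<noteq> 0}"
  shows "pdiff i f x = 0"
proof -
  let ?U = "- closure {y. f y \<noteq> 0}"
  have "((\<lambda>_. 0) has_derivative (\<lambda>_. 0)) (at x)" by simp
  then have "(f has_derivative (\<lambda>_. 0)) (at x)"
    by (rule has_derivative_transform_within_open[of _ _ _ _ ?U]) (use assms in \<open>auto intro: closure_subset[THEN subsetD]\<close>)
  then show ?thesis unfolding pdiff_def using frechet_derivative_at by metis
qed

lemma test_fun_pdiff: "test_fun f \<Longrightarrow> test_fun (pdiff i f)"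
  unfolding test_fun_def
proof safe
  assume "smooth3 f" "bounded {x. f x \<noteq> 0}"
  then show "smooth3 (pdiff i f)" using smooth3_D by blast
  have "{x. pdiff i f x \<noteq> 0} \<subseteq> closure {y. f y \<noteq> 0}" using pdiff_zero_outside by blast
  then show "bounded {x. pdiff i f x \<noteq> 0}"
    using \<open>bounded {x. f x \<noteq> 0}\<close> bounded_closure bounded_subset by blast
qed

lemma line_deriv:
  assumes "\<forall>y. f differentiable (at y)"
  shows "((\<lambda>s. f (p + s *\<^sub>R axis i 1)) has_real_derivative pdiff i f (p + t *\<^sub>R axis i 1)) (at t)"
proof -
  let ?F = "frechet_derivative f (at (p + t *\<^sub>R axis i 1))"
  have d1: "((\<lambda>s. p + s *\<^sub>R axis i 1) has_derivative (\<lambda>s. s *\<^sub>R axis i 1)) (at t)"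
    by (auto intro!: derivative_eq_intros)
  have d2: "(f has_derivative ?F) (at (p + t *\<^sub>R axis i 1))"
    using assms frechet_derivative_works by blast
  have lin: "linear ?F" using d2 has_derivative_linear by blast
  have "((f \<circ> (\<lambda>s. p + s *\<^sub>R axis i 1)) has_derivative (?F \<circ> (\<lambda>s. s *\<^sub>R axis i 1))) (at t)"
    by (rule diff_chain_at[OF d1 d2])
  moreover have "(?F \<circ> (\<lambda>s. s *\<^sub>R axis i 1)) = (*) (pdiff i f (p + t *\<^sub>R axis i 1))"
    using lin by (auto simp: pdiff_def linear_scale o_def mult.commute)
  ultimately show ?thesis unfolding has_field_derivative_def
    by (simp add: o_def)
qed
lemma second_diff_mvt:
  assumes f: "\<forall>y. f differentiable (at y)" and fi: "\<forall>y. pdiff i f differentiable (at y)"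
    and h: "h > 0"
  shows "\<exists>y. dist y x < 2*h \<and>
    f (x + h *\<^sub>R axis j 1 + h *\<^sub>R axis i 1) - f (x + h *\<^sub>R axis i 1)
      - f (x + h *\<^sub>R axis j 1) + f x = h * h * pdiff j (pdiff i f) y"
proof -
  let ?e = "axis i 1 :: real^3" and ?d = "axis j 1 :: real^3"
  define \<alpha> where "\<alpha> s = f (x + h *\<^sub>R ?d + s *\<^sub>R ?e) - f (x + s *\<^sub>R ?e)" for s
  have "(\<alpha> has_real_derivative
     (pdiff i f (x + h *\<^sub>R ?d + s *\<^sub>R ?e) - pdiff i f (x + s *\<^sub>R ?e))) (at s)" for s
    unfolding \<alpha>_def by (intro DERIV_diff line_deriv f)
  from MVT2[OF h, of \<alpha>, OF this] obtain \<sigma> where \<sigma>: "0 < \<sigma>" "\<sigma> < h"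
    "\<alpha> h - \<alpha> 0 = (h - 0) * (pdiff i f (x + h *\<^sub>R ?d + \<sigma> *\<^sub>R ?e) - pdiff i f (x + \<sigma> *\<^sub>R ?e))"
    by blast
  define \<beta> where "\<beta> t = pdiff i f (x + \<sigma> *\<^sub>R ?e + t *\<^sub>R ?d)" for t
  have "(\<beta> has_real_derivative pdiff j (pdiff i f) (x + \<sigma> *\<^sub>R ?e + t *\<^sub>R ?d)) (at t)" for t
    unfolding \<beta>_def by (intro line_deriv fi)
  from MVT2[OF h, of \<beta>, OF this] obtain \<tau> where \<tau>: "0 < \<tau>" "\<tau> < h"
    "\<beta> h - \<beta> 0 = (h - 0) * pdiff j (pdiff i f) (x + \<sigma> *\<^sub>R ?e + \<tau> *\<^sub>R ?d)"
    by blast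
  let ?y = "x + \<sigma> *\<^sub>R ?e + \<tau> *\<^sub>R ?d"
  have "dist ?y x = norm (\<sigma> *\<^sub>R ?e + \<tau> *\<^sub>R ?d)" by (simp add: dist_norm)
  also have "\<dots> \<le> norm (\<sigma> *\<^sub>R ?e) + norm (\<tau> *\<^sub>R ?d)" by (rule norm_triangle_ineq)
  also have "\<dots> = \<sigma> + \<tau>" using \<sigma> \<tau> by simp
  finally have "dist ?y x < 2 * h" using \<sigma> \<tau> by simp
  moreover have "f (x + h *\<^sub>R ?d + h *\<^sub>R ?e) - f (x + h *\<^sub>R ?e) - f (x + h *\<^sub>R ?d) + f x = \<alpha> h - \<alpha> 0"
    by (simp add: \<alpha>_def)
  moreover have "pdiff i f (x + h *\<^sub>R ?d + \<sigma> *\<^sub>R ?e) - pdiff i f (x + \<sigma> *\<^sub>R ?e) = \<beta> h - \<beta> 0"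
    by (simp add: \<beta>_def add_ac)
  ultimately show ?thesis using \<sigma>(3) \<tau>(3) by auto
qed

lemma absfoo: fixes a b c :: real shows "\<bar>c - a\<bar> < \<bar>a - b\<bar> / 2 \<Longrightarrow> \<bar>c - b\<bar> < \<bar>a - b\<bar> / 2 \<Longrightarrow> False"
  by (simp add: abs_less_iff abs_if split: if_splits)

lemma pdiff_sym:
  assumes "smooth3 f"
  shows "pdiff i (pdiff j f) x = pdiff j (pdiff i f) x"
proof (rule ccontr)
  assume ne: "pdiff i (pdiff j f) x \<noteq> pdiff j (pdiff i f) x"
  let ?D1 = "pdiff j (pdiff i f)" and ?D2 = "pdiff i (pdiff j f)"
  have f: "\<forall>y. f differentiable (at y)" and fi: "\<forall>y. pdiff i f differentiable (at y)"
    and fj: "\<forall>y. pdiff j f differentiable (at y)"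
    using assms smooth3_D by blast+
  have c1: "isCont ?D1 x" and c2: "isCont ?D2 x"
    using assms smooth3_D differentiable_imp_continuous_within by blast+
  define \<epsilon> where "\<epsilon> = \<bar>?D1 x - ?D2 x\<bar> / 2"
  have \<epsilon>: "\<epsilon> > 0" using ne by (simp add: \<epsilon>_def)
  obtain d1 where d1: "d1 > 0" "\<forall>y. dist y x < d1 \<longrightarrow> dist (?D1 y) (?D1 x) < \<epsilon>"
    using c1 \<epsilon> unfolding continuous_at_eps_delta by blast
  obtain d2 where d2: "d2 > 0" "\<forall>y. dist y x < d2 \<longrightarrow> dist (?D2 y) (?D2 x) < \<epsilon>"
    using c2 \<epsilon> unfolding continuous_at_eps_delta by blast
  define h where "h = min d1 d2 / 2"
  have h: "h > 0" using d1 d2 by (simp add: h_def)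
  obtain y1 where y1: "dist y1 x < 2*h" 
    "f (x + h *\<^sub>R axis j 1 + h *\<^sub>R axis i 1) - f (x + h *\<^sub>R axis i 1)
      - f (x + h *\<^sub>R axis j 1) + f x = h * h * ?D1 y1"
    using second_diff_mvt[OF f fi h] by blast
  obtain y2 where y2: "dist y2 x < 2*h" 
    "f (x + h *\<^sub>R axis i 1 + h *\<^sub>R axis j 1) - f (x + h *\<^sub>R axis j 1)
      - f (x + h *\<^sub>R axis i 1) + f x = h * h * ?D2 y2"
    using second_diff_mvt[OF f fj h] by blast
  have sw: "x + h *\<^sub>R axis i 1 + h *\<^sub>R axis j 1 = x + h *\<^sub>R axis j 1 + h *\<^sub>R axis i 1"
    by (simp add: add_ac)
  have "h * h * ?D1 y1 = h * h * ?D2 y2" using y1(2) y2(2) unfolding sw by linarith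
  then have eq: "?D1 y1 = ?D2 y2" using h by simp
  have "dist y1 x < d1" using y1(1) by (simp add: h_def)
  then have "dist (?D1 y1) (?D1 x) < \<epsilon>" using d1(2) by blast
  then have a1: "\<bar>?D1 y1 - ?D1 x\<bar> < \<bar>?D1 x - ?D2 x\<bar> / 2" unfolding \<epsilon>_def dist_real_def .
  have "dist y2 x < d2" using y2(1) by (simp add: h_def)
  then have "dist (?D2 y2) (?D2 x) < \<epsilon>" using d2(2) by blast
  then have a2: "\<bar>?D1 y1 - ?D2 x\<bar> < \<bar>?D1 x - ?D2 x\<bar> / 2" unfolding \<epsilon>_def dist_real_def eq .
  show False by (rule absfoo[OF a1 a2])
qed
lemma blin_meas:
  assumes "bounded_linear T" "f \<in> borel_measurable lebesgue"
  shows "(\<lambda>x. T (f x)) \<in> borel_measurable lebesgue"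
  by (rule measurable_compose[OF assms(2) borel_measurable_continuous_onI[OF linear_continuous_on[OF assms(1)]]])

lemma blin_setint:
  assumes "bounded_linear T" "set_integrable M K f"
  shows "set_integrable M K (\<lambda>x. T (f x))"
proof -
  have "integrable M (\<lambda>x. T (indicator K x *\<^sub>R f x))"
    using integrable_bounded_linear[OF assms(1)] assms(2) unfolding set_integrable_def by blast
  moreover have "T (indicator K x *\<^sub>R f x) = indicator K x *\<^sub>R T (f x)" for x
    using assms(1) by (simp add: linear_simps)
  ultimately show ?thesis unfolding set_integrable_def by simp
qed

lemma test_fun_cont: "test_fun \<psi> \<Longrightarrow> continuous_on UNIV \<psi>"
  using smooth3_cont test_fun_def by blast

lemma test_fun_meas: "test_fun \<psi> \<Longrightarrow> \<psi> \<in> borel_measurable lebesgue"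
  using borel_leb borel_measurable_continuous_onI test_fun_cont by blast

lemma locint_mult:
  fixes h :: "real^3 \<Rightarrow> real"
  assumes hm: "h \<in> borel_measurable lebesgue"
    and hi: "\<forall>K. compact K \<longrightarrow> set_integrable lebesgue K h" and \<psi>: "test_fun \<psi>"
  shows "integrable lebesgue (\<lambda>x. h x * \<psi> x)"
proof -
  let ?K = "closure {x. \<psi> x \<noteq> 0}"
  have K: "compact ?K" using \<psi> unfolding test_fun_def
    using bounded_closure compact_eq_bounded_closed by blast
  have cont: "continuous_on UNIV \<psi>" using \<psi> test_fun_cont by blast
  have "compact (\<psi> ` ?K)" using compact_continuous_image[OF continuous_on_subset[OF cont] K] by simp
  then obtain B where "\<forall>y\<in>\<psi> ` ?K. norm y \<le> B"
    using compact_imp_bounded bounded_iff by blast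
  then have B: "\<forall>x\<in>?K. norm (\<psi> x) \<le> B" by blast
  have int: "integrable lebesgue (\<lambda>x. B * (indicator ?K x *\<^sub>R h x))"
    using hi K unfolding set_integrable_def by (intro integrable_mult_right) blast
  show ?thesis
  proof (rule Bochner_Integration.integrable_bound[OF int])
    show "(\<lambda>x. h x * \<psi> x) \<in> borel_measurable lebesgue"
      using borel_measurable_times[OF hm test_fun_meas[OF \<psi>]] .
    show "AE x in lebesgue. norm (h x * \<psi> x) \<le> norm (B * (indicator ?K x *\<^sub>R h x))"
    proof (rule AE_I2)
      fix x
      show "norm (h x * \<psi> x) \<le> norm (B * (indicator ?K x *\<^sub>R h x))"
      proof (cases "x \<in> ?K")
        case True
        then have "norm (\<psi> x) \<le> B" using B by blast
        then have "\<bar>\<psi> x\<bar> \<le> \<bar>B\<bar>" by simp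
        then have "\<bar>h x\<bar> * \<bar>\<psi> x\<bar> \<le> \<bar>h x\<bar> * \<bar>B\<bar>" by (rule mult_left_mono) simp
        moreover have "\<bar>h x\<bar> * \<bar>B\<bar> = \<bar>B\<bar> * \<bar>h x\<bar>" by (rule mult.commute)
        moreover have "norm (B * (indicator ?K x *\<^sub>R h x)) = \<bar>B\<bar> * \<bar>h x\<bar>" using True by (simp only: indicator_simps norm_mult real_norm_def scaleR_one abs_mult)
        moreover have "norm (h x * \<psi> x) = \<bar>h x\<bar> * \<bar>\<psi> x\<bar>" by (simp only: norm_mult real_norm_def abs_mult)
        ultimately show ?thesis by linarith
      next
        case False
        have "\<psi> x = 0"
        proof (rule ccontr)
          assume "\<psi> x \<noteq> 0"
          then have "x \<in> {x. \<psi> x \<noteq> 0}" by simp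
          then have "x \<in> ?K" by (rule subsetD[OF closure_subset])
          then show False using False by simp
        qed
        then show ?thesis by simp
      qed
    qed
  qed
qed

lemma in_Lq_lin:
  assumes "in_Lq q G" "bounded_linear L" "q > 0"
  shows "in_Lq q (\<lambda>x. L (G x))"
proof -
  obtain K where K: "K > 0" "\<And>x. norm (L x) \<le> norm x * K"
    using bounded_linear.pos_bounded[OF assms(2)] by blast
  have m: "G \<in> borel_measurable lebesgue" and i: "integrable lebesgue (\<lambda>x. norm (G x) powr q)"
    using assms(1) unfolding in_Lq_def by auto
  have m2: "(\<lambda>x. L (G x)) \<in> borel_measurable lebesgue" using blin_meas[OF assms(2) m] .
  have "integrable lebesgue (\<lambda>x. norm (L (G x)) powr q)"
  proof (rule Bochner_Integration.integrable_bound)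
    show "integrable lebesgue (\<lambda>x. K powr q * norm (G x) powr q)" using i by simp
    show "(\<lambda>x. norm (L (G x)) powr q) \<in> borel_measurable lebesgue" using m2 by measurable
    show "AE x in lebesgue. norm (norm (L (G x)) powr q) \<le> norm (K powr q * norm (G x) powr q)"
    proof (rule AE_I2)
      fix x
      have "norm (L (G x)) powr q \<le> (norm (G x) * K) powr q"
        using K assms(3) by (intro powr_mono2) auto
      also have "\<dots> = K powr q * norm (G x) powr q" using K by (simp add: powr_mult)
      finally show "norm (norm (L (G x)) powr q) \<le> norm (K powr q * norm (G x) powr q)" by simp
    qed
  qed
  then show ?thesis using m2 unfolding in_Lq_def by simp
qed

lemma powr_sum_le:
  fixes a b q :: real
  assumes "a \<ge> 0" "b \<ge> 0" "q \<ge> 1"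
  shows "(a + b) powr q \<le> 2 powr (q - 1) * (a powr q + b powr q)"
proof -
  have one: "2 powr (q - 1) \<ge> 1" using assms by (simp add: ge_one_powr_ge_zero)
  consider "a = 0" | "b = 0" | "a > 0" "b > 0" using assms by linarith
  then show ?thesis
  proof cases
    case 1 then show ?thesis using one by (simp add: mult_le_cancel_right1)
  next
    case 2 then show ?thesis using one by (simp add: mult_le_cancel_right1)
  next
    case 3
    have "((1 - 1/2) *\<^sub>R a + (1/2) *\<^sub>R b) powr q \<le> (1 - 1/2) * a powr q + (1/2) * b powr q"
      using convex_onD[OF powr_convex[OF assms(3)], of "1/2" a b] 3 by simp
    then have c: "((a + b) / 2) powr q \<le> (a powr q + b powr q) / 2" by (simp add: field_simps)
    have e: "2 * ((a + b) / 2) = a + b" by simp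
    have "(a + b) powr q = (2 * ((a + b) / 2)) powr q" by (simp only: e)
    also have "\<dots> = 2 powr q * ((a + b) / 2) powr q" using 3 by (subst powr_mult) auto
    also have "\<dots> \<le> 2 powr q * ((a powr q + b powr q) / 2)" using c by simp
    also have "\<dots> = 2 powr (q - 1) * (a powr q + b powr q)" by (simp add: powr_diff)
    finally show ?thesis .
  qed
qed
lemma norm_add_powr_le:
  fixes x y :: "'a::real_normed_vector"
  assumes "q \<ge> 1"
  shows "norm (x + y) powr q \<le> 2 powr (q - 1) * (norm x powr q + norm y powr q)"
proof -
  have "norm (x + y) powr q \<le> (norm x + norm y) powr q"
    using assms by (intro powr_mono2) (auto intro: norm_triangle_ineq)
  also have "\<dots> \<le> 2 powr (q - 1) * (norm x powr q + norm y powr q)"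
    using assms by (intro powr_sum_le) auto
  finally show ?thesis .
qed

lemma in_Lq_add:
  fixes f g :: "real^3 \<Rightarrow> 'a::euclidean_space"
  assumes q: "q \<ge> 1" and f: "in_Lq q f" and g: "in_Lq q g"
  shows "in_Lq q (\<lambda>x. f x + g x)"
proof -
  have m: "(\<lambda>x. f x + g x) \<in> borel_measurable lebesgue"
    using f g unfolding in_Lq_def by (intro borel_measurable_add) auto
  have "integrable lebesgue (\<lambda>x. norm (f x + g x) powr q)"
  proof (rule Bochner_Integration.integrable_bound)
    show "integrable lebesgue (\<lambda>x. 2 powr (q - 1) * (norm (f x) powr q + norm (g x) powr q))"
      using f g unfolding in_Lq_def by (intro integrable_mult_right Bochner_Integration.integrable_add) auto
    show "(\<lambda>x. norm (f x + g x) powr q) \<in> borel_measurable lebesgue" using m by measurable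
    show "AE x in lebesgue. norm (norm (f x + g x) powr q)
        \<le> norm (2 powr (q - 1) * (norm (f x) powr q + norm (g x) powr q))"
      using norm_add_powr_le[OF q] by (intro AE_I2) (simp add: abs_of_nonneg)
  qed
  then show ?thesis using m unfolding in_Lq_def by simp
qed

lemma Lq_norm_powr:
  assumes "q > 0"
  shows "Lq_norm q f powr q = integral\<^sup>L lebesgue (\<lambda>x. norm (f x) powr q)"
proof -
  have "integral\<^sup>L lebesgue (\<lambda>x. norm (f x) powr q) \<ge> 0" by (intro integral_nonneg_AE) auto
  then show ?thesis using assms unfolding Lq_norm_def by (simp add: powr_powr)
qed

lemma Lq_norm_nonneg: "Lq_norm q f \<ge> 0"
  unfolding Lq_norm_def by simp

lemma Lq_norm_add_le:
  fixes f g :: "real^3 \<Rightarrow> 'a::euclidean_space"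
  assumes q: "q \<ge> 1" and f: "in_Lq q f" and g: "in_Lq q g"
    and A: "Lq_norm q f \<le> A" "Lq_norm q g \<le> A"
  shows "Lq_norm q (\<lambda>x. f x + g x) \<le> 2 * A"
proof -
  have A0: "A \<ge> 0" using A Lq_norm_nonneg order_trans by blast
  have If: "integral\<^sup>L lebesgue (\<lambda>x. norm (f x) powr q) \<le> A powr q"
    using Lq_norm_powr[of q f] q A(1) by (metis Lq_norm_nonneg less_le_trans powr_mono2 zero_less_one less_imp_le)
  have Ig: "integral\<^sup>L lebesgue (\<lambda>x. norm (g x) powr q) \<le> A powr q"
    using Lq_norm_powr[of q g] q A(2) by (metis Lq_norm_nonneg less_le_trans powr_mono2 zero_less_one less_imp_le)
  have "integral\<^sup>L lebesgue (\<lambda>x. norm (f x + g x) powr q)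
      \<le> integral\<^sup>L lebesgue (\<lambda>x. 2 powr (q - 1) * (norm (f x) powr q + norm (g x) powr q))"
    using in_Lq_add[OF q f g] f g norm_add_powr_le[OF q] unfolding in_Lq_def
    by (intro integral_mono integrable_mult_right Bochner_Integration.integrable_add) auto
  also have "\<dots> = 2 powr (q - 1) * (integral\<^sup>L lebesgue (\<lambda>x. norm (f x) powr q)
      + integral\<^sup>L lebesgue (\<lambda>x. norm (g x) powr q))"
    using f g unfolding in_Lq_def by simp
  also have "\<dots> \<le> 2 powr (q - 1) * (A powr q + A powr q)"
    using If Ig by (intro mult_left_mono) auto
  also have "\<dots> = 2 powr q * A powr q" by (simp add: powr_diff)
  also have "\<dots> = (2 * A) powr q" using A0 by (simp add: powr_mult)
  finally have I: "integral\<^sup>L lebesgue (\<lambda>x. norm (f x + g x) powr q) \<le> (2 * A) powr q" .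
  have "Lq_norm q (\<lambda>x. f x + g x) \<le> ((2 * A) powr q) powr (1 / q)"
    unfolding Lq_norm_def using I q
    by (intro powr_mono2) (auto intro: integral_nonneg_AE)
  also have "\<dots> = 2 * A" using A0 q by (simp add: powr_powr)
  finally show ?thesis .
qed

lemma Lq_norm_uminus: "Lq_norm q (\<lambda>x. - f x) = Lq_norm q f"
  unfolding Lq_norm_def by simp

lemma in_Lq_uminus: "in_Lq q f \<Longrightarrow> in_Lq q (\<lambda>x. - f x)"
  unfolding in_Lq_def by (simp add: borel_measurable_uminus)

lemma pointwise1: "cross3 v (curl_of M) = - (v v* M) + M *v v"
  unfolding vec_eq_iff forall_3 by (simp add: cross3_def curl_of_def matrix_vector_mult_def vector_matrix_mult_def sum_3 algebra_simps)

lemma pointwise2: "2 *\<^sub>R (sym_part M *v v) = v v* M + M *v v"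
  unfolding vec_eq_iff forall_3 by (simp add: sym_part_def transpose_def matrix_vector_mult_def vector_matrix_mult_def sum_3 algebra_simps)

lemma bl_vm: "bounded_linear (\<lambda>M::real^3^3. v v* M)"
  unfolding linear_conv_bounded_linear[symmetric]
  by (rule linearI) (simp_all add: vec_eq_iff vector_matrix_mult_def sum.distrib sum_distrib_left algebra_simps)

lemma bl_mv: "bounded_linear (\<lambda>M::real^3^3. M *v v)"
  unfolding linear_conv_bounded_linear[symmetric]
  by (rule linearI) (simp_all add: vec_eq_iff matrix_vector_mult_def sum.distrib sum_distrib_left algebra_simps)

lemma bl_ij: "bounded_linear (\<lambda>M::real^3^3. M $ i $ j)"
  using bounded_linear_compose[OF bounded_linear_vec_nth[of j] bounded_linear_vec_nth[of i]] by simp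

lemma weak_grad_facts:
  assumes "weak_grad u G"
  shows wg_int_u: "\<And>\<psi> j. test_fun \<psi> \<Longrightarrow> integrable lebesgue (\<lambda>x. u x $ j * \<psi> x)"
    and wg_int_G: "\<And>\<psi> i j. test_fun \<psi> \<Longrightarrow> integrable lebesgue (\<lambda>x. G x $ i $ j * \<psi> x)"
    and wg_eq: "\<And>\<psi> i j. test_fun \<psi> \<Longrightarrow>
        integral\<^sup>L lebesgue (\<lambda>x. G x $ i $ j * \<psi> x) = - integral\<^sup>L lebesgue (\<lambda>x. u x $ j * pdiff i \<psi> x)"
proof -
  have um: "u \<in> borel_measurable lebesgue" and Gm: "G \<in> borel_measurable lebesgue"
    and ui: "\<And>K. compact K \<Longrightarrow> set_integrable lebesgue K u"
    and Gi: "\<And>K. compact K \<Longrightarrow> set_integrable lebesgue K G"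
    and eq: "\<And>\<psi> i j. test_fun \<psi> \<Longrightarrow> integral\<^sup>L lebesgue (\<lambda>x. u x $ j * pdiff i \<psi> x) =
        - integral\<^sup>L lebesgue (\<lambda>x. G x $ i $ j * \<psi> x)"
    using assms unfolding weak_grad_def by auto
  fix \<psi> i j
  assume \<psi>: "test_fun \<psi>"
  show "integrable lebesgue (\<lambda>x. u x $ j * \<psi> x)"
    using blin_meas[OF bounded_linear_vec_nth um] blin_setint[OF bounded_linear_vec_nth ui]
    by (intro locint_mult \<psi>) auto
  show "integrable lebesgue (\<lambda>x. G x $ i $ j * \<psi> x)"
    using blin_meas[OF bl_ij Gm] blin_setint[OF bl_ij Gi]
    by (intro locint_mult \<psi>) auto
  show "integral\<^sup>L lebesgue (\<lambda>x. G x $ i $ j * \<psi> x) = - integral\<^sup>L lebesgue (\<lambda>x. u x $ j * pdiff i \<psi> x)"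
    using eq[OF \<psi>] by simp
qed

lemma wdf:
  assumes grad: "weak_grad u G" and divfree: "AE x in lebesgue. (\<Sum>i\<in>UNIV. G x $ i $ i) = 0"
  shows "weakly_div_free (\<lambda>x. v v* G x)"
  unfolding weakly_div_free_def
proof (intro allI impI)
  fix \<phi> assume \<phi>: "test_fun \<phi>"
  have sm: "smooth3 \<phi>" using \<phi> unfolding test_fun_def by blast
  have tp: "\<And>i. test_fun (pdiff i \<phi>)" using test_fun_pdiff[OF \<phi>] .
  have key: "integral\<^sup>L lebesgue (\<lambda>x. G x $ i $ j * pdiff j \<phi> x)
      = integral\<^sup>L lebesgue (\<lambda>x. G x $ j $ j * pdiff i \<phi> x)" for i j
  proof -
    have "integral\<^sup>L lebesgue (\<lambda>x. G x $ i $ j * pdiff j \<phi> x)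
        = - integral\<^sup>L lebesgue (\<lambda>x. u x $ j * pdiff i (pdiff j \<phi>) x)"
      by (rule wg_eq[OF grad tp])
    also have "\<dots> = - integral\<^sup>L lebesgue (\<lambda>x. u x $ j * pdiff j (pdiff i \<phi>) x)"
      using pdiff_sym[OF sm] by simp
    also have "\<dots> = integral\<^sup>L lebesgue (\<lambda>x. G x $ j $ j * pdiff i \<phi> x)"
      using wg_eq[OF grad tp[of i], of j j] by simp
    finally show ?thesis .
  qed
  have zero: "(\<Sum>j\<in>UNIV. integral\<^sup>L lebesgue (\<lambda>x. G x $ j $ j * pdiff i \<phi> x)) = 0" for i
  proof -
    have "(\<Sum>j\<in>UNIV. integral\<^sup>L lebesgue (\<lambda>x. G x $ j $ j * pdiff i \<phi> x))
        = integral\<^sup>L lebesgue (\<lambda>x. \<Sum>j\<in>UNIV. G x $ j $ j * pdiff i \<phi> x)"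
      by (rule Bochner_Integration.integral_sum[symmetric]) (rule wg_int_G[OF grad tp])
    also have "\<dots> = integral\<^sup>L lebesgue (\<lambda>x. 0::real)"
    proof -
      have m1: "(\<lambda>x. \<Sum>j\<in>UNIV. G x $ j $ j * pdiff i \<phi> x) \<in> borel_measurable lebesgue"
        using wg_int_G[OF grad tp] by (intro borel_measurable_sum) auto
      have m2: "(\<lambda>x. 0::real) \<in> borel_measurable lebesgue" by simp
      have ae: "AE x in lebesgue. (\<Sum>j\<in>UNIV. G x $ j $ j * pdiff i \<phi> x) = 0"
        using divfree by eventually_elim (simp add: sum_distrib_right[symmetric])
      show ?thesis using integral_eq_zero_AE[OF ae] by simp
    qed
    finally show ?thesis by simp
  qed
  have pw: "(v v* G x) \<bullet> grad3 \<phi> x = (\<Sum>i\<in>UNIV. v $ i * (\<Sum>j\<in>UNIV. G x $ i $ j * pdiff j \<phi> x))" for x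
    by (simp add: inner_vec_def vector_matrix_mult_def grad3_def sum_3 algebra_simps)
  have "integral\<^sup>L lebesgue (\<lambda>x. (v v* G x) \<bullet> grad3 \<phi> x)
      = integral\<^sup>L lebesgue (\<lambda>x. \<Sum>i\<in>UNIV. v $ i * (\<Sum>j\<in>UNIV. G x $ i $ j * pdiff j \<phi> x))"
    unfolding pw ..
  also have "\<dots> = (\<Sum>i\<in>UNIV. v $ i * (\<Sum>j\<in>UNIV. integral\<^sup>L lebesgue (\<lambda>x. G x $ i $ j * pdiff j \<phi> x)))"
    using wg_int_G[OF grad tp]
    by (simp add: Bochner_Integration.integral_sum integrable_mult_right Bochner_Integration.integrable_sum)
  also have "\<dots> = (\<Sum>i\<in>UNIV. v $ i * (\<Sum>j\<in>UNIV. integral\<^sup>L lebesgue (\<lambda>x. G x $ j $ j * pdiff i \<phi> x)))"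
    by (intro sum.cong refl arg_cong[where f="\<lambda>t. v $ _ * t"] key)
  also have "\<dots> = 0" using zero by simp
  finally show "integral\<^sup>L lebesgue (\<lambda>x. (v v* G x) \<bullet> grad3 \<phi> x) = 0" .
qed

lemma grad_field:
  assumes grad: "weak_grad u G"
  shows "is_gradient_field (\<lambda>x. G x *v v)"
  unfolding is_gradient_field_def
proof (intro allI impI)
  fix z assume z: "test_field z \<and> (\<forall>x. div3 z x = 0)"
  have tz: "\<And>i. test_fun (\<lambda>y. z y $ i)" using z unfolding test_field_def by blast
  have tp: "\<And>i. test_fun (pdiff i (\<lambda>y. z y $ i))" using test_fun_pdiff[OF tz] .
  have pw: "(G x *v v) \<bullet> z x = (\<Sum>j\<in>UNIV. v $ j * (\<Sum>i\<in>UNIV. G x $ i $ j * z x $ i))" for x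
    by (simp add: inner_vec_def matrix_vector_mult_def sum_3 algebra_simps)
  have "integral\<^sup>L lebesgue (\<lambda>x. (G x *v v) \<bullet> z x)
      = integral\<^sup>L lebesgue (\<lambda>x. \<Sum>j\<in>UNIV. v $ j * (\<Sum>i\<in>UNIV. G x $ i $ j * z x $ i))"
    unfolding pw ..
  also have "\<dots> = (\<Sum>j\<in>UNIV. v $ j * (\<Sum>i\<in>UNIV. integral\<^sup>L lebesgue (\<lambda>x. G x $ i $ j * z x $ i)))"
    using wg_int_G[OF grad tz]
    by (simp add: Bochner_Integration.integral_sum integrable_mult_right Bochner_Integration.integrable_sum)
  also have "\<dots> = (\<Sum>j\<in>UNIV. v $ j * (\<Sum>i\<in>UNIV. - integral\<^sup>L lebesgue (\<lambda>x. u x $ j * pdiff i (\<lambda>y. z y $ i) x)))"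
    using wg_eq[OF grad tz] by simp
  also have "\<dots> = (\<Sum>j\<in>UNIV. v $ j * (- integral\<^sup>L lebesgue (\<lambda>x. \<Sum>i\<in>UNIV. u x $ j * pdiff i (\<lambda>y. z y $ i) x)))"
    using wg_int_u[OF grad tp]
    by (simp add: Bochner_Integration.integral_sum sum_negf)
  also have "\<dots> = (\<Sum>j\<in>UNIV. v $ j * (- integral\<^sup>L lebesgue (\<lambda>x. u x $ j * div3 z x)))"
    by (simp add: div3_def sum_distrib_left)
  also have "\<dots> = 0" using z by simp
  finally show "integral\<^sup>L lebesgue (\<lambda>x. (G x *v v) \<bullet> z x) = 0" .
qed

lemma wdf_uminus: "weakly_div_free f \<Longrightarrow> weakly_div_free (\<lambda>x. - f x)"
  unfolding weakly_div_free_def by simp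


theorem proposition3p2:
  fixes q C :: real and u :: "real^3 \<Rightarrow> real^3" and G :: "real^3 \<Rightarrow> real^3^3"
    and v :: "real^3"
  assumes q: "1 < q"
    and C: "helmholtz_const q C"
    and grad: "weak_grad u G"
    and gradLq: "in_Lq q G"
    and divfree: "AE x in lebesgue. (\<Sum>i\<in>UNIV. G x $ i $ i) = 0"
    and v: "norm v = 1"
  defines "\<omega> \<equiv> \<lambda>x. curl_of (G x)"
    and "S \<equiv> \<lambda>x. sym_part (G x)"
  shows "Lq_norm q (\<lambda>x. v v* G x) \<le> C * Lq_norm q (\<lambda>x. cross3 v (\<omega> x)) \<and>
         Lq_norm q (\<lambda>x. v v* G x) \<le> C * Lq_norm q (\<lambda>x. 2 *\<^sub>R (S x *v v)) \<and>
         Lq_norm q (\<lambda>x. G x *v v) \<le> C * Lq_norm q (\<lambda>x. cross3 v (\<omega> x)) \<and>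
         Lq_norm q (\<lambda>x. G x *v v) \<le> C * Lq_norm q (\<lambda>x. 2 *\<^sub>R (S x *v v)) \<and>
         1 / (2 * C) * Lq_norm q (\<lambda>x. cross3 v (\<omega> x)) \<le> Lq_norm q (\<lambda>x. 2 *\<^sub>R (S x *v v)) \<and>
         Lq_norm q (\<lambda>x. 2 *\<^sub>R (S x *v v)) \<le> 2 * C * Lq_norm q (\<lambda>x. cross3 v (\<omega> x))"
proof -
  define a where "a = (\<lambda>x. v v* G x)"
  define b where "b = (\<lambda>x. G x *v v)"
  define w1 where "w1 = (\<lambda>x. cross3 v (\<omega> x))"
  define w2 where "w2 = (\<lambda>x. 2 *\<^sub>R (S x *v v))"
  have q1: "q \<ge> 1" and q0: "q > 0" using q by auto
  have C1: "C \<ge> 1" using C unfolding helmholtz_const_def by blast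
  have Hc: "\<And>w a b. in_Lq q w \<Longrightarrow> in_Lq q a \<Longrightarrow> in_Lq q b \<Longrightarrow>
        weakly_div_free a \<Longrightarrow> is_gradient_field b \<Longrightarrow>
        (AE x in lebesgue. w x = a x + b x) \<Longrightarrow>
          Lq_norm q a \<le> C * Lq_norm q w \<and> Lq_norm q b \<le> C * Lq_norm q w"
    using C unfolding helmholtz_const_def by blast
  have aL: "in_Lq q a" unfolding a_def by (rule in_Lq_lin[OF gradLq bl_vm q0])
  have bL: "in_Lq q b" unfolding b_def by (rule in_Lq_lin[OF gradLq bl_mv q0])
  have maL: "in_Lq q (\<lambda>x. - a x)" using in_Lq_uminus[OF aL] .
  have w1eq: "w1 = (\<lambda>x. - a x + b x)"
    unfolding w1_def a_def b_def \<omega>_def by (simp add: pointwise1)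
  have w2eq: "w2 = (\<lambda>x. a x + b x)"
    unfolding w2_def a_def b_def S_def by (simp add: pointwise2)
  have w1L: "in_Lq q w1" unfolding w1eq by (rule in_Lq_add[OF q1 maL bL])
  have w2L: "in_Lq q w2" unfolding w2eq by (rule in_Lq_add[OF q1 aL bL])
  have adf: "weakly_div_free a" unfolding a_def by (rule wdf[OF grad divfree])
  have madf: "weakly_div_free (\<lambda>x. - a x)" by (rule wdf_uminus[OF adf])
  have bg: "is_gradient_field b" unfolding b_def by (rule grad_field[OF grad])
  have H1: "Lq_norm q (\<lambda>x. - a x) \<le> C * Lq_norm q w1 \<and> Lq_norm q b \<le> C * Lq_norm q w1"
    by (rule Hc[OF w1L maL bL madf bg]) (simp add: w1eq)
  have H2: "Lq_norm q a \<le> C * Lq_norm q w2 \<and> Lq_norm q b \<le> C * Lq_norm q w2"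
    by (rule Hc[OF w2L aL bL adf bg]) (simp add: w2eq)
  have na: "Lq_norm q (\<lambda>x. - a x) = Lq_norm q a" by (rule Lq_norm_uminus)
  have r1: "Lq_norm q a \<le> C * Lq_norm q w1" using H1 na by simp
  have r3: "Lq_norm q b \<le> C * Lq_norm q w1" using H1 by simp
  have r2: "Lq_norm q a \<le> C * Lq_norm q w2" using H2 by simp
  have r4: "Lq_norm q b \<le> C * Lq_norm q w2" using H2 by simp
  have "Lq_norm q w1 \<le> 2 * (C * Lq_norm q w2)"
    unfolding w1eq by (rule Lq_norm_add_le[OF q1 maL bL]) (use r2 r4 na in simp_all)
  then have r5: "1 / (2 * C) * Lq_norm q w1 \<le> Lq_norm q w2"
    using C1 by (simp add: field_simps)
  have "Lq_norm q w2 \<le> 2 * (C * Lq_norm q w1)"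
    unfolding w2eq by (rule Lq_norm_add_le[OF q1 aL bL]) (use r1 r3 in simp_all)
  then have r6: "Lq_norm q w2 \<le> 2 * C * Lq_norm q w1" by simp
  show ?thesis using r1 r2 r3 r4 r5 r6 unfolding a_def b_def w1_def w2_def by blast
qed

end
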